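(* Let $K$ be a finite oriented simplicial complex, let $q,h,h'$ be non-negative integers, and fix the basis $\{\sigma_1^{(q)},\dots,\sigma_n^{(q)}\}$ of $C_q(K)$ given by the oriented $q$-simplices (and the analogous bases of $C_{q+h}(K)$ and $C_{q-h'}(K)$). Let $B_{q+h,h}$ and $B_{q,h'}$ be the matrices of $\partial_{q+h,h}\colon C_{q+h}(K)\to C_q(K)$ and $\partial_{q,h'}\colon C_q(K)\to C_{q-h'}(K)$ in these bases, and set $L^U_{q,h}=B_{q+h,h}B_{q+h,h}^t$, $L^L_{q,h'}=B_{q,h'}^tB_{q,h'}$ and $L_{q,h,h'}=L^U_{q,h}+L^L_{q,h'}$ (the matrix of the multi-combinatorial Laplacian $\Delta_{q,h,h'}=\partial_{q+h,h}\circ\partial^*_{q+h,h}+\partial^*_{q,h'}\circ\partial_{q,h'}$). Then $$\big(L^U_{q,h}\big)_{i,j}=\begin{cases}\deg_U^{h,q+h}(\sigma_i^{(q)}) & i=j,\\ \operatorname{odeg}_U^{q+h}(\sigma_i^{(q)},\sigma_j^{(q)}) & i\neq j,\end{cases}\qquad \big(L^L_{q,h'}\big)_{i,j}=\begin{cases}\binom{q+1}{q-h'+1} & i=j,\\ \operatorname{odeg}_L^{q-h'}(\sigma_i^{(q)},\sigma_j^{(q)}) & i\neq j,\end{cases}$$ and $$\big(L_{q,h,h'}\big)_{i,j}=\begin{cases}\deg_U^{h,q+h}(\sigma_i^{(q)})+\binom{q+1}{q-h'+1} & i=j,\\ \operatorname{odeg}_U^{q+h}(\sigma_i^{(q)},\sigma_j^{(q)})+\operatorname{odeg}_L^{q-h'}(\sigma_i^{(q)},\sigma_j^{(q)})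 & i\neq j.\end{cases}$$
   Context: $K$ is a finite abstract simplicial complex (finite family of nonempty finite vertex sets closed under nonempty subsets); a $q$-simplex has $q+1$ vertices; a face of a simplex is a simplex of $K$ contained in it (a simplex is a face of itself). Orientation: orderings of the vertices modulo even permutations; $[v_{\eta(0)},\dots,v_{\eta(q)}]=\operatorname{sign}(\eta)[v_0,\dots,v_q]$. Each simplex has a fixed orientation; $C_m(K)$ is the real vector space with basis the fixed-orientation $m$-simplices (opposite orientation = negative), $C_m(K)=0$ for $m\notin[0,\dim K]$, with the inner product making this basis orthonormal; $\partial^*$ denotes the adjoint with respect to these inner products (its matrix is the transpose). Multi-parameter boundary operator: for $m\ge k\ge0$, $\partial_{m,k}\colon C_m(K)\to C_{m-k}(K)$ is linear with $\partial_{m,k}([v_{\eta(0)},\dots,v_{\eta(m)}])=\sum_{J}\operatorname{sign}(\eta)\operatorname{sign}(\epsilon_J)[v_0,\dots,\widehat{v_{j_1}},\dots,\widehat{v_{j_k}},\dots,v_m]$, summing over subsets $J=\{j_1<\dots<j_k\}\subseteq\{0,\dots,m\}$ (hatted vertices removed, others in increasing index order), $\epsilon_J$ the permutation of $\{0,\dots,m\}$ with $r\mapsto j_{r+1}$ for $r<k$ and $k,\dots,m$ mapped increasingly onto the complement of $J$; if $m<k$ then $\partial_{m,k}=0$. For a $p$-simplex $\tau$ and a face $\sigma\subseteq\tau$ of dimension $m$, $\operatorname{sign}(\tau,\sigma)\in\{\pm1\}$ is the coefficient of $\sigma$ in $\partial_{p,p-m}(\tau)$ (so $\operatorname{sign}(\tau,\tau)=1$).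 Upper sign: $\operatorname{sig}_U(\sigma,\sigma';\tau^{(p)})=0$ if $\sigma\cup\sigma'\not\subseteq\tau^{(p)}$, else $\operatorname{sign}(\tau^{(p)},\sigma)\operatorname{sign}(\tau^{(p)},\sigma')$. Lower sign: $\operatorname{sig}_L(\sigma,\sigma';\tau^{(p)})=0$ if $\tau^{(p)}\not\subseteq\sigma\cap\sigma'$, else $\operatorname{sign}(\sigma,\tau^{(p)})\operatorname{sign}(\sigma',\tau^{(p)})$. Both are independent of the orientation of $\tau^{(p)}$. Oriented degrees: $\operatorname{odeg}^p_U(\sigma,\sigma')=\frac12\sum_{\tau^{(p)}}\operatorname{sig}_U(\sigma,\sigma';\tau^{(p)})$ and $\operatorname{odeg}^p_L(\sigma,\sigma')=\frac12\sum_{\tau^{(p)}}\operatorname{sig}_L(\sigma,\sigma';\tau^{(p)})$, sums over all oriented $p$-simplices of $K$ (each with both orientations). $\deg_U^{h,q+h}(\sigma^{(q)})$ is the number of $(q+h)$-simplices $\sigma^{(q+h)}$ of $K$ such that some $(q+h)$-simplex contains both $\sigma^{(q)}$ and $\sigma^{(q+h)}$, i.e. the number of $(q+h)$-simplices of $K$ having $\sigma^{(q)}$ as a face. *)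

theory Defs
  imports "HOL-Combinatorics.Permutations" "Jordan_Normal_Form.Matrix"
begin

definition simplicial_complex :: "'v set set \<Rightarrow> bool" where
  "simplicial_complex K \<longleftrightarrow> finite K \<and> (\<forall>\<sigma>\<in>K. finite \<sigma> \<and> \<sigma> \<noteq> {})
     \<and> (\<forall>\<sigma>\<in>K. \<forall>\<tau>. \<tau> \<subseteq> \<sigma> \<and> \<tau> \<noteq> {} \<longrightarrow> \<tau> \<in> K)"

definition simplices :: "'v set set \<Rightarrow> nat \<Rightarrow> 'v set set" where
  "simplices K m = {\<sigma>\<in>K. card \<sigma> = m + 1}"

text \<open>A fixed orientation: each simplex gets a fixed ordering of its vertices
  (orientation = its class modulo even permutations).\<close>
definition orientation :: "'v set set \<Rightarrow> ('v set \<Rightarrow> 'v list) \<Rightarrow> bool" where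
  "orientation K ori \<longleftrightarrow> (\<forall>\<sigma>\<in>K. distinct (ori \<sigma>) \<and> set (ori \<sigma>) = \<sigma>)"

text \<open>Relative sign of two orderings xs, ys of the same vertex set:
  if xs ! i = ys ! (eta i), then [xs] = sign eta [ys].\<close>
definition list_perm :: "'v list \<Rightarrow> 'v list \<Rightarrow> nat \<Rightarrow> nat" where
  "list_perm xs ys i = (if i < length xs then (THE j. j < length ys \<and> ys ! j = xs ! i) else i)"

definition lsign :: "'v list \<Rightarrow> 'v list \<Rightarrow> int" where
  "lsign xs ys = sign (list_perm xs ys)"

definition epsJ :: "nat \<Rightarrow> nat set \<Rightarrow> nat \<Rightarrow> nat" where
  "epsJ m J r = (if r \<le> m then (sorted_list_of_set J @ sorted_list_of_set ({0..m} - J)) ! r else r)"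

text \<open>Coefficient of the (fixed-orientation) simplex sigma in
  the multi-parameter boundary of the (fixed-orientation) m-simplex tau,
  i.e. in partial_(m,k)(tau), following the defining sum over J literally.
  If m < k, there are no such J and the coefficient is 0.\<close>
definition bdry_coeff :: "('v set \<Rightarrow> 'v list) \<Rightarrow> nat \<Rightarrow> nat \<Rightarrow> 'v set \<Rightarrow> 'v set \<Rightarrow> real" where
  "bdry_coeff ori m k \<tau> \<sigma> =
     (\<Sum>J\<in>{J. J \<subseteq> {0..m} \<and> card J = k}.
        of_int (sign (epsJ m J)) *
        (let w = nths (ori \<tau>) ({0..m} - J)
         in if set w = \<sigma> then of_int (lsign w (ori \<sigma>)) else 0))"

text \<open>Matrix of partial_(m,k) : C_m(K) \<rightarrow> C_(m-k)(K) with respect to the ordered bases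
  cs (of C_m) and rs (of C_(m-k)).\<close>
definition bmat :: "('v set \<Rightarrow> 'v list) \<Rightarrow> nat \<Rightarrow> nat \<Rightarrow> 'v set list \<Rightarrow> 'v set list \<Rightarrow> real mat" where
  "bmat ori m k cs rs =
     mat (length rs) (length cs) (\<lambda>(i, j). bdry_coeff ori m k (cs ! j) (rs ! i))"

definition face_sign :: "('v set \<Rightarrow> 'v list) \<Rightarrow> 'v set \<Rightarrow> 'v set \<Rightarrow> real" where
  "face_sign ori \<tau> \<sigma> = bdry_coeff ori (card \<tau> - 1) (card \<tau> - card \<sigma>) \<tau> \<sigma>"

text \<open>Oriented p-simplices are represented as pairs (e, tau), e \<in> {1,-1}, meaning
  e times the fixed-orientation simplex tau. Signs w.r.t. the opposite orientation
  change sign by linearity of the boundary operator.\<close>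
definition sigU :: "('v set \<Rightarrow> 'v list) \<Rightarrow> 'v set \<Rightarrow> 'v set \<Rightarrow> real \<times> 'v set \<Rightarrow> real" where
  "sigU ori \<sigma> \<sigma>' t = (case t of (e, \<tau>) \<Rightarrow>
     if \<not> (\<sigma> \<union> \<sigma>' \<subseteq> \<tau>) then 0
     else (e * face_sign ori \<tau> \<sigma>) * (e * face_sign ori \<tau> \<sigma>'))"

definition sigL :: "('v set \<Rightarrow> 'v list) \<Rightarrow> 'v set \<Rightarrow> 'v set \<Rightarrow> real \<times> 'v set \<Rightarrow> real" where
  "sigL ori \<sigma> \<sigma>' t = (case t of (e, \<tau>) \<Rightarrow>
     if \<not> (\<tau> \<subseteq> \<sigma> \<inter> \<sigma>') then 0
     else (e * face_sign ori \<sigma> \<tau>) * (e * face_sign ori \<sigma>' \<tau>))"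

definition oriented_simplices :: "'v set set \<Rightarrow> nat \<Rightarrow> (real \<times> 'v set) set" where
  "oriented_simplices K p = {1, -1} \<times> simplices K p"

definition odegU :: "'v set set \<Rightarrow> ('v set \<Rightarrow> 'v list) \<Rightarrow> nat \<Rightarrow> 'v set \<Rightarrow> 'v set \<Rightarrow> real" where
  "odegU K ori p \<sigma> \<sigma>' = (1/2) * (\<Sum>t\<in>oriented_simplices K p. sigU ori \<sigma> \<sigma>' t)"

definition odegL :: "'v set set \<Rightarrow> ('v set \<Rightarrow> 'v list) \<Rightarrow> nat \<Rightarrow> 'v set \<Rightarrow> 'v set \<Rightarrow> real" where
  "odegL K ori p \<sigma> \<sigma>' = (1/2) * (\<Sum>t\<in>oriented_simplices K p. sigL ori \<sigma> \<sigma>' t)"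

definition degU :: "'v set set \<Rightarrow> nat \<Rightarrow> nat \<Rightarrow> 'v set \<Rightarrow> nat" where
  "degU K h q \<sigma> = card {\<tau>\<in>simplices K (q + h). \<sigma> \<subseteq> \<tau>}"

end

theory Submission imports Defs begin
lemma bdry_coeff_nonface:
  assumes "orientation K ori" "\<tau> \<in> K" "\<not> \<sigma> \<subseteq> \<tau>"
  shows "bdry_coeff ori m k \<tau> \<sigma> = 0"
proof -
  have "set (nths (ori \<tau>) A) \<noteq> \<sigma>" for A
    using set_nths_subset[of "ori \<tau>" A] assms unfolding orientation_def by auto
  thus ?thesis unfolding bdry_coeff_def by (simp add: Let_def)
qed

lemma bdry_coeff_face:
  assumes sc: "simplicial_complex K" and ori: "orientation K ori" and tK: "\<tau> \<in> K"
    and ct: "card \<tau> = m + 1" and st: "\<sigma> \<subseteq> \<tau>" and cs: "card \<sigma> + k = m + 1" and km: "k \<le> m"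
  shows "bdry_coeff ori m k \<tau> \<sigma> * bdry_coeff ori m k \<tau> \<sigma> = 1"
proof -
  define xs where "xs = ori \<tau>"
  have dx: "distinct xs" and sx: "set xs = \<tau>" using ori tK unfolding orientation_def xs_def by auto
  have lx: "length xs = m + 1" using distinct_card[OF dx] sx ct by simp
  have sne: "\<sigma> \<noteq> {}" using cs km by auto
  have sK: "\<sigma> \<in> K" using sc tK st sne unfolding simplicial_complex_def by blast
  define J0 where "J0 = {i\<in>{0..m}. xs ! i \<notin> \<sigma>}"
  have compl: "{0..m} - J0 = {i\<in>{0..m}. xs ! i \<in> \<sigma>}" unfolding J0_def by auto
  have img: "(\<lambda>i. xs ! i) ` {i\<in>{0..m}. xs ! i \<in> \<sigma>} = \<sigma>"
  proof (intro equalityI subsetI)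
    fix x assume "x \<in> (\<lambda>i. xs ! i) ` {i\<in>{0..m}. xs ! i \<in> \<sigma>}"
    then show "x \<in> \<sigma>" by auto
  next
    fix x assume x: "x \<in> \<sigma>"
    then have "x \<in> set xs" using st sx by auto
    then obtain i where i: "i < length xs" "xs ! i = x" by (auto simp: in_set_conv_nth)
    then have "i \<in> {i\<in>{0..m}. xs ! i \<in> \<sigma>}" using lx x by auto
    then show "x \<in> (\<lambda>i. xs ! i) ` {i\<in>{0..m}. xs ! i \<in> \<sigma>}" using i by (auto simp: image_iff)
  qed
  have setw: "set (nths xs ({0..m} - J)) = \<sigma> \<longleftrightarrow> J = J0" if "J \<subseteq> {0..m}" for J
  proof
    assume h: "set (nths xs ({0..m} - J)) = \<sigma>"
    have "{0..m} - J = {i\<in>{0..m}. xs ! i \<in> \<sigma>}"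
    proof (intro equalityI subsetI)
      fix i assume "i \<in> {0..m} - J"
      then show "i \<in> {i\<in>{0..m}. xs ! i \<in> \<sigma>}" using h lx unfolding set_nths by auto
    next
      fix i assume i: "i \<in> {i\<in>{0..m}. xs ! i \<in> \<sigma>}"
      then obtain i' where i': "i' < length xs" "i' \<in> {0..m} - J" "xs ! i = xs ! i'"
        using h unfolding set_nths by auto
      have "i = i'" using nth_eq_iff_index_eq[OF dx, of i i'] i i' lx by auto
      then show "i \<in> {0..m} - J" using i' by simp
    qed
    then have e1: "{0..m} - J = {0..m} - J0" using compl by simp
    have J0s: "J0 \<subseteq> {0..m}" unfolding J0_def by auto
    have "J = {0..m} - ({0..m} - J)" using double_diff[OF that subset_refl] by simp
    also have "\<dots> = {0..m} - ({0..m} - J0)" using e1 by simp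
    also have "\<dots> = J0" using double_diff[OF J0s subset_refl] by simp
    finally show "J = J0" .
  next
    assume "J = J0"
    have "set (nths xs ({0..m} - J0)) = (\<lambda>i. xs ! i) ` {i\<in>{0..m}. xs ! i \<in> \<sigma>}"
      unfolding compl set_nths using lx by auto
    then show "set (nths xs ({0..m} - J)) = \<sigma>" using img \<open>J = J0\<close> by simp
  qed
  have cc: "card {i\<in>{0..m}. xs ! i \<in> \<sigma>} = card \<sigma>"
  proof -
    have "inj_on (\<lambda>i. xs ! i) {i\<in>{0..m}. xs ! i \<in> \<sigma>}"
      using dx lx by (auto simp: inj_on_def nth_eq_iff_index_eq)
    moreover have "(\<lambda>i. xs ! i) ` {i\<in>{0..m}. xs ! i \<in> \<sigma>} = \<sigma>"
      by (rule img)
    ultimately show ?thesis using card_image by fastforce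
  qed
  have cJ0: "card J0 = k"
  proof -
    have "card {0..m} = card ({0..m} - J0) + card J0"
    proof -
      have J0s: "J0 \<subseteq> {0..m}" unfolding J0_def by auto
      have "card ({0..m} - J0) = card {0..m} - card J0" by (rule card_Diff_subset) (use J0s finite_subset in auto)
      moreover have "card J0 \<le> card {0..m}" by (rule card_mono) (use J0s in auto)
      ultimately show ?thesis by simp
    qed
    then show ?thesis using compl cc cs by simp
  qed
  have J0in: "J0 \<in> {J. J \<subseteq> {0..m} \<and> card J = k}" using cJ0 unfolding J0_def by auto
  have s0: "set (nths (ori \<tau>) ({0..m} - J0)) = \<sigma>"
    using setw[of J0] J0in unfolding xs_def by simp
  define f where "f J = of_int (sign (epsJ m J)) *
        (let w = nths (ori \<tau>) ({0..m} - J)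
         in if set w = \<sigma> then of_int (lsign w (ori \<sigma>)) else (0::real))" for J
  have "bdry_coeff ori m k \<tau> \<sigma> = sum f {J. J \<subseteq> {0..m} \<and> card J = k}"
    unfolding bdry_coeff_def f_def ..
  also have "\<dots> = f J0"
  proof -
    have fin: "finite {J. J \<subseteq> {0..m} \<and> card J = k}"
      by (rule finite_subset[of _ "Pow {0..m}"]) auto
    have z: "sum f ({J. J \<subseteq> {0..m} \<and> card J = k} - {J0}) = 0"
      by (rule sum.neutral) (use setw in \<open>auto simp: f_def Let_def xs_def\<close>)
    show ?thesis using sum.remove[OF fin J0in, of f] z by simp
  qed
  finally have e: "bdry_coeff ori m k \<tau> \<sigma> = of_int (sign (epsJ m J0)) * of_int (lsign (nths (ori \<tau>) ({0..m} - J0)) (ori \<sigma>))"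
    using s0 by (simp add: f_def Let_def)
  have "sign p * sign p = (1::int)" for p :: "nat \<Rightarrow> nat" by simp
  then show ?thesis unfolding e lsign_def
    by (metis (no_types, opaque_lifting) mult.assoc mult.left_commute mult_1_right of_int_1 of_int_mult)
qed

lemma sum_nth_distinct:
  assumes "distinct xs"
  shows "(\<Sum>k\<in>{0..<length xs}. f (xs ! k)) = sum f (set xs)"
proof -
  have inj: "inj_on (\<lambda>k. xs ! k) {0..<length xs}"
    using assms by (auto simp: inj_on_def nth_eq_iff_index_eq)
  have im: "(\<lambda>k. xs ! k) ` {0..<length xs} = set xs"
    by (auto simp: set_conv_nth image_iff)
  show ?thesis using sum.reindex[OF inj, of f] im by simp
qed

lemma simp_mem:
  assumes "\<sigma> \<in> simplices K p" shows "\<sigma> \<in> K" "card \<sigma> = p + 1"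
  using assms unfolding simplices_def by auto

lemma sum_pm:
  fixes g :: "real \<times> 'a \<Rightarrow> real"
  assumes "finite S" and "\<And>e \<tau>. e \<in> {1, -1} \<Longrightarrow> \<tau> \<in> S \<Longrightarrow> g (e, \<tau>) = G \<tau>"
  shows "(1/2) * (\<Sum>t\<in>{1, -1} \<times> S. g t) = (\<Sum>\<tau>\<in>S. G \<tau>)"
proof -
  have "(\<Sum>t\<in>{1, -1} \<times> S. g t) = (\<Sum>e\<in>{1::real, -1}. \<Sum>\<tau>\<in>S. g (e, \<tau>))"
    by (rule sum.cartesian_product')
  also have "\<dots> = (\<Sum>e\<in>{1::real, -1}. \<Sum>\<tau>\<in>S. G \<tau>)"
    using assms(2) by (intro sum.cong refl) auto
  also have "\<dots> = 2 * (\<Sum>\<tau>\<in>S. G \<tau>)" by simp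
  finally show ?thesis by simp
qed

lemma finite_simplices: "simplicial_complex K \<Longrightarrow> finite (simplices K p)"
  unfolding simplicial_complex_def simplices_def by auto


theorem mainTheorem4:
  fixes K :: "'v set set" and ori :: "'v set \<Rightarrow> 'v list"
    and q h h' :: nat and bq bu bl :: "'v set list"
  assumes "simplicial_complex K" and "orientation K ori"
    and "h' \<le> q"
    and "distinct bq" and "set bq = simplices K q"
    and "distinct bu" and "set bu = simplices K (q + h)"
    and "distinct bl" and "set bl = simplices K (q - h')"
  defines "LU \<equiv> bmat ori (q + h) h bu bq * transpose_mat (bmat ori (q + h) h bu bq)"
    and "LL \<equiv> transpose_mat (bmat ori q h' bq bl) * bmat ori q h' bq bl"
  shows "\<forall>i < length bq. \<forall>j < length bq.
     LU $$ (i, j) = (if i = j then real (degU K h q (bq ! i))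
                     else odegU K ori (q + h) (bq ! i) (bq ! j))
   \<and> LL $$ (i, j) = (if i = j then real ((q + 1) choose (q - h' + 1))
                     else odegL K ori (q - h') (bq ! i) (bq ! j))
   \<and> (LU + LL) $$ (i, j) = (if i = j then real (degU K h q (bq ! i)) + real ((q + 1) choose (q - h' + 1))
                     else odegU K ori (q + h) (bq ! i) (bq ! j) + odegL K ori (q - h') (bq ! i) (bq ! j))"
proof (intro allI impI)
  fix i j assume i: "i < length bq" and j: "j < length bq"
  note sc = assms(1) and ori = assms(2)
  let ?S = "simplices K (q + h)" and ?T = "simplices K (q - h')"
  define c where "c \<tau> \<sigma> = bdry_coeff ori (q + h) h \<tau> \<sigma>" for \<tau> \<sigma>
  define d where "d \<sigma> \<rho> = bdry_coeff ori q h' \<sigma> \<rho>" for \<sigma> \<rho>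
  have bqS: "bq ! n \<in> simplices K q" if "n < length bq" for n using that assms(5) nth_mem by blast
  have LUe: "LU $$ (i, j) = (\<Sum>\<tau>\<in>?S. c \<tau> (bq ! i) * c \<tau> (bq ! j))"
  proof -
    have "LU $$ (i, j) = (\<Sum>k\<in>{0..<length bu}. c (bu ! k) (bq ! i) * c (bu ! k) (bq ! j))"
      using i j unfolding LU_def bmat_def c_def by (simp add: scalar_prod_def)
    also have "\<dots> = (\<Sum>\<tau>\<in>set bu. c \<tau> (bq ! i) * c \<tau> (bq ! j))"
      by (rule sum_nth_distinct[OF assms(6)])
    finally show ?thesis using assms(7) by simp
  qed
  have LLe: "LL $$ (i, j) = (\<Sum>\<rho>\<in>?T. d (bq ! i) \<rho> * d (bq ! j) \<rho>)"
  proof -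
    have "LL $$ (i, j) = (\<Sum>k\<in>{0..<length bl}. d (bq ! i) (bl ! k) * d (bq ! j) (bl ! k))"
      using i j unfolding LL_def bmat_def d_def by (simp add: scalar_prod_def)
    also have "\<dots> = (\<Sum>\<rho>\<in>set bl. d (bq ! i) \<rho> * d (bq ! j) \<rho>)"
      by (rule sum_nth_distinct[OF assms(8)])
    finally show ?thesis using assms(9) by simp
  qed
  have cval: "c \<tau> \<sigma> * c \<tau> \<sigma> = (if \<sigma> \<subseteq> \<tau> then 1 else 0)" if "\<tau> \<in> ?S" "\<sigma> \<in> simplices K q" for \<tau> \<sigma>
    using bdry_coeff_face[OF sc ori, of \<tau> "q + h" \<sigma> h] bdry_coeff_nonface[OF ori, of \<tau> \<sigma> "q + h" h]
      simp_mem[OF that(1)] simp_mem[OF that(2)] unfolding c_def by auto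
  have cz: "c \<tau> \<sigma> = 0" if "\<tau> \<in> ?S" "\<not> \<sigma> \<subseteq> \<tau>" for \<tau> \<sigma>
    using bdry_coeff_nonface[OF ori, of \<tau> \<sigma> "q + h" h] simp_mem[OF that(1)] that(2) unfolding c_def by auto
  have dval: "d \<sigma> \<rho> * d \<sigma> \<rho> = (if \<rho> \<subseteq> \<sigma> then 1 else 0)" if "\<rho> \<in> ?T" "\<sigma> \<in> simplices K q" for \<rho> \<sigma>
    using bdry_coeff_face[OF sc ori, of \<sigma> q \<rho> h'] bdry_coeff_nonface[OF ori, of \<sigma> \<rho> q h']
      simp_mem[OF that(1)] simp_mem[OF that(2)] assms(3) unfolding d_def by auto
  have dz: "d \<sigma> \<rho> = 0" if "\<sigma> \<in> simplices K q" "\<not> \<rho> \<subseteq> \<sigma>" for \<rho> \<sigma>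
    using bdry_coeff_nonface[OF ori, of \<sigma> \<rho> q h'] simp_mem[OF that(1)] that(2) unfolding d_def by auto
  have U: "LU $$ (i, j) = (if i = j then real (degU K h q (bq ! i))
                     else odegU K ori (q + h) (bq ! i) (bq ! j))"
  proof (cases "i = j")
    case True
    have "LU $$ (i, j) = (\<Sum>\<tau>\<in>?S. c \<tau> (bq ! i) * c \<tau> (bq ! i))"
      using LUe True by simp
    also have "\<dots> = (\<Sum>\<tau>\<in>?S. if bq ! i \<subseteq> \<tau> then 1 else 0)"
      using cval bqS[OF i] by (intro sum.cong refl) auto
    also have "\<dots> = real (card {\<tau>\<in>?S. bq ! i \<subseteq> \<tau>})"
      using finite_simplices[OF sc] by (simp add: sum.inter_filter[symmetric])
    finally show ?thesis using True unfolding degU_def by simp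
  next
    case False
    have "odegU K ori (q + h) (bq ! i) (bq ! j) = (\<Sum>\<tau>\<in>?S. c \<tau> (bq ! i) * c \<tau> (bq ! j))"
      unfolding odegU_def oriented_simplices_def
    proof (rule sum_pm[OF finite_simplices[OF sc]])
      fix e :: real and \<tau> assume e: "e \<in> {1, -1}" and t: "\<tau> \<in> ?S"
      have ee: "e * e = 1" using e by auto
      have fs: "face_sign ori \<tau> \<sigma> = c \<tau> \<sigma>" if "\<sigma> \<in> simplices K q" for \<sigma>
        using simp_mem[OF t] simp_mem[OF that] unfolding face_sign_def c_def by simp
      show "sigU ori (bq ! i) (bq ! j) (e, \<tau>) = c \<tau> (bq ! i) * c \<tau> (bq ! j)"
        unfolding sigU_def using fs[OF bqS[OF i]] fs[OF bqS[OF j]] cz[OF t] ee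
        by (auto simp: algebra_simps)
    qed
    then show ?thesis using False LUe by simp
  qed
  have L: "LL $$ (i, j) = (if i = j then real ((q + 1) choose (q - h' + 1))
                     else odegL K ori (q - h') (bq ! i) (bq ! j))"
  proof (cases "i = j")
    case True
    have "LL $$ (i, j) = (\<Sum>\<rho>\<in>?T. d (bq ! i) \<rho> * d (bq ! i) \<rho>)"
      using LLe True by simp
    also have "\<dots> = (\<Sum>\<rho>\<in>?T. if \<rho> \<subseteq> bq ! i then 1 else 0)"
      using dval bqS[OF i] by (intro sum.cong refl) auto
    also have "\<dots> = real (card {\<rho>\<in>?T. \<rho> \<subseteq> bq ! i})"
      using finite_simplices[OF sc] by (simp add: sum.inter_filter[symmetric])
    also have "{\<rho>\<in>?T. \<rho> \<subseteq> bq ! i} = {\<rho>. \<rho> \<subseteq> bq ! i \<and> card \<rho> = q - h' + 1}"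
    proof (intro equalityI subsetI)
      fix \<rho> assume "\<rho> \<in> {\<rho>\<in>?T. \<rho> \<subseteq> bq ! i}"
      then show "\<rho> \<in> {\<rho>. \<rho> \<subseteq> bq ! i \<and> card \<rho> = q - h' + 1}" unfolding simplices_def by auto
    next
      fix \<rho> assume r: "\<rho> \<in> {\<rho>. \<rho> \<subseteq> bq ! i \<and> card \<rho> = q - h' + 1}"
      have "\<rho> \<noteq> {}" using r by auto
      moreover have "bq ! i \<in> K" using simp_mem(1)[OF bqS[OF i]] .
      ultimately have "\<rho> \<in> K" using sc r unfolding simplicial_complex_def by blast
      then show "\<rho> \<in> {\<rho>\<in>?T. \<rho> \<subseteq> bq ! i}" using r unfolding simplices_def by auto
    qed
    also have "card {\<rho>. \<rho> \<subseteq> bq ! i \<and> card \<rho> = q - h' + 1} = (q + 1) choose (q - h' + 1)"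
    proof -
      have "finite (bq ! i)" using sc simp_mem(1)[OF bqS[OF i]] unfolding simplicial_complex_def by blast
      then show ?thesis using n_subsets[of "bq ! i" "q - h' + 1"] simp_mem(2)[OF bqS[OF i]] by simp
    qed
    finally show ?thesis using True by simp
  next
    case False
    have "odegL K ori (q - h') (bq ! i) (bq ! j) = (\<Sum>\<rho>\<in>?T. d (bq ! i) \<rho> * d (bq ! j) \<rho>)"
      unfolding odegL_def oriented_simplices_def
    proof (rule sum_pm[OF finite_simplices[OF sc]])
      fix e :: real and \<rho> assume e: "e \<in> {1, -1}" and t: "\<rho> \<in> ?T"
      have ee: "e * e = 1" using e by auto
      have fs: "face_sign ori \<sigma> \<rho> = d \<sigma> \<rho>" if "\<sigma> \<in> simplices K q" for \<sigma>
        using simp_mem[OF t] simp_mem[OF that] assms(3) unfolding face_sign_def d_def by simp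
      show "sigL ori (bq ! i) (bq ! j) (e, \<rho>) = d (bq ! i) \<rho> * d (bq ! j) \<rho>"
        unfolding sigL_def using fs[OF bqS[OF i]] fs[OF bqS[OF j]] dz[OF bqS[OF i]] dz[OF bqS[OF j]] ee
        by (auto simp: algebra_simps)
    qed
    then show ?thesis using False LLe by simp
  qed
  have "(LU + LL) $$ (i, j) = LU $$ (i, j) + LL $$ (i, j)"
    using i j unfolding LL_def bmat_def by simp
  then show "LU $$ (i, j) = (if i = j then real (degU K h q (bq ! i))
                     else odegU K ori (q + h) (bq ! i) (bq ! j))
   \<and> LL $$ (i, j) = (if i = j then real ((q + 1) choose (q - h' + 1))
                     else odegL K ori (q - h') (bq ! i) (bq ! j))
   \<and> (LU + LL) $$ (i, j) = (if i = j then real (degU K h q (bq ! i)) + real ((q + 1) choose (q - h' + 1))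
                     else odegU K ori (q + h) (bq ! i) (bq ! j) + odegL K ori (q - h') (bq ! i) (bq ! j))"
    using U L by simp
qed

end
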